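(* Let $\kappa$ be a regular cardinal, $A,B$ $\kappa$-additive complete atomic modal algebras and $f:A\to B$ a homomorphism of complete modal algebras. Then the map $F(f):\mathrm{At}(B)\to\mathrm{At}(A)$, $F(f)(b)=f_*(b)$, is a homomorphism of multi-relational Kripke frames from $F(B)$ to $F(A)$.
   Context: A modal algebra is a Boolean algebra $A$ with a unary operation $\Diamond$ satisfying $\Diamond 0=0$ and $\Diamond(x\vee y)=\Diamond x\vee\Diamond y$; it is complete if the Boolean reduct is complete, atomic if every non-zero element is the join of the atoms below it; $\mathrm{At}(A)$ is its set of atoms. It is $\kappa$-additive if $\Diamond\bigvee X=\bigvee_{x\in X}\Diamond x$ for all $X\subseteq A$ with $|X|<\kappa$. A homomorphism of complete modal algebras is a Boolean homomorphism preserving all joins and meets and commuting with $\Diamond$. For such $f:A\to B$, $f_{*}(b)=\bigwedge\{x\in A\mid b\leq f(x)\}$; it maps atoms to atoms. For $X\subseteq A$, $R(X)$ is the relation on $\mathrm{At}(A)$ with $a\,R(X)\,c\iff a\leq\bigwedge\{\Diamond x\mid x\in X,\ c\leq x\}$ (empty meet $=1$), and $F(A)=\langle\mathrm{At}(A),\{R(X)\mid X\subseteq A,|X|<\kappa\}\rangle$. A homomorphism of multi-relational Kripke frames $g:\langle W_1,S_1\rangle\to\langle W_2,S_2\rangle$ is a map $g:W_1\to W_2$ such that: (i) for every $x\in W_1$ and $R_2\in S_2$ there is $R_1\in S_1$ such that for all $y\in W_1$, $xR_1y$ implies $g(x)R_2g(y)$; (ii) for every $x\in W_1$ and $R_1\in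 S_1$ there is $R_2\in S_2$ such that for all $u\in W_2$, if $g(x)R_2u$ then there exists $y\in W_1$ with $xR_1y$ and $g(y)=u$. *)

theory Defs
  imports Main
begin

definition modal_algebra :: "('a::complete_boolean_algebra \<Rightarrow> 'a) \<Rightarrow> bool" where
  "modal_algebra dia \<longleftrightarrow> dia bot = bot \<and> (\<forall>x y. dia (sup x y) = sup (dia x) (dia y))"

definition is_atom :: "'a::complete_boolean_algebra \<Rightarrow> bool" where
  "is_atom a \<longleftrightarrow> a \<noteq> bot \<and> (\<forall>x. x \<le> a \<longrightarrow> x = bot \<or> x = a)"

definition atoms :: "'a::complete_boolean_algebra set" where
  "atoms = {a. is_atom a}"

definition atomic_alg :: "'a::complete_boolean_algebra itself \<Rightarrow> bool" where
  "atomic_alg _ \<longleftrightarrow> (\<forall>x::'a. x \<noteq> bot \<longrightarrow> x = Sup {a \<in> atoms. a \<le> x})"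

definition kappa_additive :: "'k rel \<Rightarrow> ('a::complete_boolean_algebra \<Rightarrow> 'a) \<Rightarrow> bool" where
  "kappa_additive \<kappa> dia \<longleftrightarrow> (\<forall>X::'a set. (card_of X, \<kappa>) \<in> ordLess \<longrightarrow> dia (Sup X) = Sup (dia ` X))"

definition cma_hom ::
  "('a::complete_boolean_algebra \<Rightarrow> 'a) \<Rightarrow> ('b::complete_boolean_algebra \<Rightarrow> 'b) \<Rightarrow> ('a \<Rightarrow> 'b) \<Rightarrow> bool" where
  "cma_hom diaA diaB f \<longleftrightarrow>
     f bot = bot \<and> f top = top \<and>
     (\<forall>x y. f (sup x y) = sup (f x) (f y)) \<and>
     (\<forall>x y. f (inf x y) = inf (f x) (f y)) \<and>
     (\<forall>x. f (- x) = - f x) \<and>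
     (\<forall>X. f (Sup X) = Sup (f ` X)) \<and>
     (\<forall>X. f (Inf X) = Inf (f ` X)) \<and>
     (\<forall>x. f (diaA x) = diaB (f x))"

definition lower_adj :: "('a::complete_boolean_algebra \<Rightarrow> 'b::complete_boolean_algebra) \<Rightarrow> 'b \<Rightarrow> 'a" where
  "lower_adj f b = Inf {x. b \<le> f x}"

definition relR :: "('a::complete_boolean_algebra \<Rightarrow> 'a) \<Rightarrow> 'a set \<Rightarrow> ('a \<times> 'a) set" where
  "relR dia X = {(a, c). a \<in> atoms \<and> c \<in> atoms \<and> a \<le> Inf {dia x | x. x \<in> X \<and> c \<le> x}}"

definition frame_rels :: "'k rel \<Rightarrow> ('a::complete_boolean_algebra \<Rightarrow> 'a) \<Rightarrow> ('a \<times> 'a) set set" where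
  "frame_rels \<kappa> dia = {relR dia X | X. (card_of X, \<kappa>) \<in> ordLess}"

definition frame_hom ::
  "'w set \<Rightarrow> ('w \<times> 'w) set set \<Rightarrow> 'v set \<Rightarrow> ('v \<times> 'v) set set \<Rightarrow> ('w \<Rightarrow> 'v) \<Rightarrow> bool" where
  "frame_hom W1 S1 W2 S2 g \<longleftrightarrow>
     (\<forall>x\<in>W1. g x \<in> W2) \<and>
     (\<forall>x\<in>W1. \<forall>R2\<in>S2. \<exists>R1\<in>S1. \<forall>y\<in>W1. (x, y) \<in> R1 \<longrightarrow> (g x, g y) \<in> R2) \<and>
     (\<forall>x\<in>W1. \<forall>R1\<in>S1. \<exists>R2\<in>S2. \<forall>u\<in>W2. (g x, u) \<in> R2 \<longrightarrow>
        (\<exists>y\<in>W1. (x, y) \<in> R1 \<and> g y = u))"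

end

theory Submission
  imports Defs
begin

lemma atom_le_Sup:
  fixes b :: "'a::complete_boolean_algebra"
  assumes "is_atom b" "b \<le> Sup S"
  shows "\<exists>s\<in>S. b \<le> s"
proof (rule ccontr)
  assume "\<not> (\<exists>s\<in>S. b \<le> s)"
  hence "\<forall>s\<in>S. b \<le> - s"
  proof (intro ballI)
    fix s assume s: "s \<in> S" and h: "\<not> (\<exists>s\<in>S. b \<le> s)"
    have "inf b s \<le> b" by simp
    hence "inf b s = bot \<or> inf b s = b" using assms(1) unfolding is_atom_def by blast
    moreover have "inf b s \<noteq> b" using h s by (metis inf.absorb_iff1)
    ultimately have "inf b s = bot" by blast
    thus "b \<le> - s" using inf_shunt by blast
  qed
  hence "b \<le> Inf (uminus ` S)" by (simp add: le_INF_iff)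
  hence "b \<le> - Sup S" by (simp add: uminus_Sup)
  with assms(2) have "b \<le> inf (Sup S) (- Sup S)" by (rule le_infI)
  hence "b = bot" by (metis inf_compl_bot bot_unique)
  with assms(1) show False unfolding is_atom_def by blast
qed

lemma finite_less_kappa:
  assumes "Card_order \<kappa>" "\<not> finite (Field \<kappa>)" "finite A"
  shows "(card_of A, \<kappa>) \<in> ordLess"
proof -
  have "Well_order \<kappa>" using assms(1) card_order_on_well_order_on by blast
  moreover have "Well_order (card_of A)" by (rule card_of_Well_order)
  ultimately show ?thesis using finite_ordLess_infinite[of "card_of A" \<kappa>] assms
    by (simp add: Field_card_of)
qed

theorem proposition7p5:
  fixes \<kappa> :: "'k rel"
    and diaA :: "'a::complete_boolean_algebra \<Rightarrow> 'a"
    and diaB :: "'b::complete_boolean_algebra \<Rightarrow> 'b"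
    and f :: "'a \<Rightarrow> 'b"
  assumes "Card_order \<kappa>" and "\<not> finite (Field \<kappa>)" and "regularCard \<kappa>"
    and "modal_algebra diaA" and "modal_algebra diaB"
    and "atomic_alg TYPE('a)" and "atomic_alg TYPE('b)"
    and "kappa_additive \<kappa> diaA" and "kappa_additive \<kappa> diaB"
    and "cma_hom diaA diaB f"
  shows "frame_hom (atoms :: 'b set) (frame_rels \<kappa> diaB) (atoms :: 'a set) (frame_rels \<kappa> diaA)
           (lower_adj f)"
proof -
  note hom = assms(10)[unfolded cma_hom_def]
  have fbot: "f bot = bot" using hom by blast
  have fSup: "\<And>X. f (Sup X) = Sup (f ` X)" using hom by blast
  have fInf: "\<And>X. f (Inf X) = Inf (f ` X)" using hom by blast
  have fcomp: "\<And>x. f (- x) = - f x" using hom by blast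
  have fdia: "\<And>x. f (diaA x) = diaB (f x)" using hom by blast
  have fmono: "\<And>x y. x \<le> y \<Longrightarrow> f x \<le> f y"
  proof -
    fix x y :: 'a assume "x \<le> y"
    hence "sup x y = y" by (simp add: sup.absorb2)
    moreover have "f (sup x y) = sup (f x) (f y)" using hom by blast
    ultimately show "f x \<le> f y" by (metis sup.cobounded1)
  qed
  have diamono: "\<And>x y. x \<le> y \<Longrightarrow> diaB x \<le> diaB y"
  proof -
    fix x y :: 'b assume "x \<le> y"
    hence "sup x y = y" by (simp add: sup.absorb2)
    moreover have "diaB (sup x y) = sup (diaB x) (diaB y)" using assms(5) unfolding modal_algebra_def by blast
    ultimately show "diaB x \<le> diaB y" by (metis sup.cobounded1)
  qed
  define g where "g = lower_adj f"
  have g_le: "\<And>b x. b \<le> f x \<Longrightarrow> g b \<le> x"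
    unfolding g_def lower_adj_def by (simp add: Inf_lower)
  have le_fg: "\<And>b. b \<le> f (g b)"
    unfolding g_def lower_adj_def fInf by (auto intro: Inf_greatest)
  have g_atom: "\<And>b. b \<in> atoms \<Longrightarrow> g b \<in> atoms"
  proof -
    fix b :: 'b assume "b \<in> atoms"
    hence b: "is_atom b" unfolding atoms_def by simp
    have "g b \<noteq> bot"
    proof
      assume "g b = bot"
      hence "b \<le> bot" using le_fg[of b] fbot by simp
      thus False using b bot_unique unfolding is_atom_def by blast
    qed
    moreover have "\<forall>x. x \<le> g b \<longrightarrow> x = bot \<or> x = g b"
    proof (intro allI impI)
      fix x assume x: "x \<le> g b"
      show "x = bot \<or> x = g b"
      proof (cases "b \<le> f x")
        case True
        then show ?thesis using g_le x by (simp add: order_antisym)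
      next
        case False
        have "inf b (f x) \<le> b" by simp
        hence "inf b (f x) = bot \<or> inf b (f x) = b" using b unfolding is_atom_def by blast
        moreover have "inf b (f x) \<noteq> b" using False by (metis inf.absorb_iff1)
        ultimately have "b \<le> - f x" using inf_shunt by blast
        hence "b \<le> f (- x)" by (simp add: fcomp)
        hence "g b \<le> - x" by (rule g_le)
        with x have "x \<le> inf x (- x)" by (meson inf.boundedI order_trans order_refl)
        thus ?thesis by (metis inf_compl_bot bot_unique)
      qed
    qed
    ultimately show "g b \<in> atoms" unfolding atoms_def is_atom_def by simp
  qed
  have g_eq: "\<And>d u. d \<in> atoms \<Longrightarrow> u \<in> atoms \<Longrightarrow> d \<le> f u \<Longrightarrow> g d = u"
  proof -
    fix d u assume d: "d \<in> atoms" and u: "u \<in> atoms" and "d \<le> f u"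
    hence "g d \<le> u" using g_le by blast
    moreover have "g d \<noteq> bot" using g_atom[OF d] unfolding atoms_def is_atom_def by simp
    ultimately show "g d = u" using u unfolding atoms_def is_atom_def by blast
  qed
  have part1: "\<forall>x\<in>(atoms::'b set). \<forall>R2\<in>frame_rels \<kappa> diaA. \<exists>R1\<in>frame_rels \<kappa> diaB.
      \<forall>y\<in>atoms. (x, y) \<in> R1 \<longrightarrow> (g x, g y) \<in> R2"
  proof (intro ballI)
    fix b :: 'b and R2 assume b: "b \<in> atoms" and R2: "R2 \<in> frame_rels \<kappa> diaA"
    then obtain Y where Y: "R2 = relR diaA Y" "(card_of Y, \<kappa>) \<in> ordLess"
      unfolding frame_rels_def by blast
    have "(card_of (f ` Y), \<kappa>) \<in> ordLess"
      using card_of_image[of f Y] Y(2) ordLeq_ordLess_trans by blast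
    hence R1: "relR diaB (f ` Y) \<in> frame_rels \<kappa> diaB" unfolding frame_rels_def by blast
    show "\<exists>R1\<in>frame_rels \<kappa> diaB. \<forall>y\<in>atoms. (b, y) \<in> R1 \<longrightarrow> (g b, g y) \<in> R2"
    proof (rule bexI[OF _ R1], intro ballI impI)
      fix d assume d: "d \<in> atoms" and bd: "(b, d) \<in> relR diaB (f ` Y)"
      hence bI: "b \<le> Inf {diaB x | x. x \<in> f ` Y \<and> d \<le> x}" unfolding relR_def by simp
      have "g b \<le> Inf {diaA x | x. x \<in> Y \<and> g d \<le> x}"
      proof (rule Inf_greatest, clarify)
        fix y assume y: "y \<in> Y" "g d \<le> y"
        have "d \<le> f (g d)" by (rule le_fg)
        also have "\<dots> \<le> f y" using fmono y(2) .
        finally have "d \<le> f y" .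
        hence "b \<le> diaB (f y)" proof - have "diaB (f y) \<in> {diaB x |x. x \<in> f ` Y \<and> d \<le> x}" using \<open>d \<le> f y\<close> y(1) by blast thus ?thesis using bI by (meson Inf_lower order_trans) qed
        hence "b \<le> f (diaA y)" by (simp add: fdia)
        thus "g b \<le> diaA y" by (rule g_le)
      qed
      thus "(g b, g d) \<in> R2" using Y(1) g_atom b d unfolding relR_def by simp
    qed
  qed
  have part2: "\<forall>x\<in>(atoms::'b set). \<forall>R1\<in>frame_rels \<kappa> diaB. \<exists>R2\<in>frame_rels \<kappa> diaA.
      \<forall>u\<in>atoms. (g x, u) \<in> R2 \<longrightarrow> (\<exists>y\<in>atoms. (x, y) \<in> R1 \<and> g y = u)"
  proof (intro ballI)
    fix b :: 'b and R1 assume b: "b \<in> atoms" and R1: "R1 \<in> frame_rels \<kappa> diaB"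
    then obtain X where X: "R1 = relR diaB X" "(card_of X, \<kappa>) \<in> ordLess"
      unfolding frame_rels_def by blast
    define X' where "X' = {x \<in> X. \<not> b \<le> diaB x}"
    have X'c: "(card_of X', \<kappa>) \<in> ordLess"
      using card_of_mono1[of X' X] X(2) ordLeq_ordLess_trans unfolding X'_def by blast
    have addX': "diaB (Sup X') = Sup (diaB ` X')"
      using assms(9) X'c unfolding kappa_additive_def by blast
    define y0 where "y0 = Sup {x. f x \<le> Sup X'}"
    have fy0: "f y0 \<le> Sup X'" unfolding y0_def fSup by (auto intro: Sup_least)
    have R2: "relR diaA {y0} \<in> frame_rels \<kappa> diaA"
      using finite_less_kappa[OF assms(1,2), of "{y0}"] unfolding frame_rels_def by blast
    show "\<exists>R2\<in>frame_rels \<kappa> diaA. \<forall>u\<in>atoms. (g b, u) \<in> R2 \<longrightarrow> (\<exists>y\<in>atoms. (b, y) \<in> R1 \<and> g y = u)"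
    proof (rule bexI[OF _ R2], intro ballI impI)
      fix u :: 'a assume u: "u \<in> atoms" and bu: "(g b, u) \<in> relR diaA {y0}"
      hence gbI: "g b \<le> Inf {diaA x | x. x \<in> {y0} \<and> u \<le> x}" unfolding relR_def by simp
      show "\<exists>y\<in>atoms. (b, y) \<in> R1 \<and> g y = u"
      proof (rule ccontr)
        assume H: "\<not> (\<exists>y\<in>atoms. (b, y) \<in> R1 \<and> g y = u)"
        have sub: "\<forall>d\<in>atoms. d \<le> f u \<longrightarrow> d \<le> Sup X'"
        proof (intro ballI impI)
          fix d assume d: "d \<in> atoms" and dfu: "d \<le> f u"
          have "g d = u" using g_eq d u dfu by blast
          hence "(b, d) \<notin> relR diaB X" using H X(1) d by blast
          hence "\<not> b \<le> Inf {diaB x | x. x \<in> X \<and> d \<le> x}" using b d unfolding relR_def by simp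
          then obtain x where x: "x \<in> X" "d \<le> x" "\<not> b \<le> diaB x"
            by (auto intro: Inf_greatest)
          hence "x \<in> X'" unfolding X'_def by simp
          thus "d \<le> Sup X'" using x(2) by (auto intro: order_trans Sup_upper)
        qed
        have "f u \<le> Sup X'"
        proof (cases "f u = bot")
          case True then show ?thesis by simp
        next
          case False
          hence "f u = Sup {a \<in> atoms. a \<le> f u}" using assms(7) unfolding atomic_alg_def by blast
          also have "\<dots> \<le> Sup X'" using sub by (auto intro: Sup_least)
          finally show ?thesis .
        qed
        hence "u \<le> y0" unfolding y0_def by (auto intro: Sup_upper)
        hence "g b \<le> diaA y0" using gbI by (auto intro: order_trans Inf_lower)
        hence "f (g b) \<le> f (diaA y0)" by (rule fmono)
        hence "b \<le> diaB (f y0)" using le_fg[of b] fdia by (metis order_trans)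
        also have "\<dots> \<le> diaB (Sup X')" using diamono fy0 .
        finally have "b \<le> Sup (diaB ` X')" using addX' by simp
        then obtain s where "s \<in> diaB ` X'" "b \<le> s" using atom_le_Sup b unfolding atoms_def by blast
        thus False unfolding X'_def by auto
      qed
    qed
  qed
  show ?thesis unfolding frame_hom_def g_def[symmetric] using g_atom part1 part2 by blast
qed

end
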